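(* Let $p$ be an odd prime and $1\le\ell\le p-1$ with Legendre symbol $\left(\frac{8\ell+1}{p}\right)=-1$. Then for all $n,k\ge0$, $$b\!\left(4p^{2k+3}n+\frac{(8\ell+1)p^{2k+2}-1}{2}\right)\equiv 0\pmod 8.$$
   Context: The mock theta function $\mathcal{B}(q)=\sum_{n\ge0}\frac{q^n(-q;q^2)_n}{(q;q^2)_{n+1}}=\sum_{n\ge0}b(n)q^n$, where $(a;q)_n=\prod_{j=0}^{n-1}(1-aq^j)$. *)

theory Defs
  imports "HOL-Computational_Algebra.Formal_Power_Series" "HOL-Number_Theory.Number_Theory"
begin

definition qpoch :: "'a::comm_ring_1 fps \<Rightarrow> 'a fps \<Rightarrow> nat \<Rightarrow> 'a fps" where
  "qpoch a q n = (\<Prod>j<n. 1 - a * q ^ j)"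

definition Bterm :: "nat \<Rightarrow> rat fps" where
  "Bterm m = fps_X ^ m * qpoch (- fps_X) (fps_X ^ 2) m / qpoch fps_X (fps_X ^ 2) (Suc m)"

(* coefficient b(n) of q^n in B(q). The m-th summand is divisible by q^m,
   so only summands m <= n contribute to the coefficient of q^n. *)
definition b :: "nat \<Rightarrow> rat" where
  "b n = fps_nth (\<Sum>m\<le>n. Bterm m) n"

end

theory Submission
  imports Defs
begin

notation fps_nth (infixl \<open>$\<close> 75)





definition geo :: "nat \<Rightarrow> int fps" where
  "geo d = Abs_fps (\<lambda>m. if d dvd m then 1 else 0)"

definition kk :: "nat \<Rightarrow> int fps" where
  "kk d = Abs_fps (\<lambda>m. if d dvd m then int (m div d) else 0)"

lemma geo_inv:
  assumes "d > 0" shows "(1 - fps_X ^ d) * geo d = 1"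
proof (rule fps_ext)
  fix m
  have "(1 - fps_X ^ d) * geo d = geo d - fps_X ^ d * geo d" by (simp add: algebra_simps)
  moreover have "(geo d - fps_X ^ d * geo d) $ m = (1::int fps) $ m"
  proof (cases "m < d")
    case True
    then show ?thesis using assms
      by (auto simp: geo_def fps_X_power_mult_nth dest: dvd_imp_le)
  next
    case False
    then have "d dvd (m - d) \<longleftrightarrow> d dvd m"
      by (metis dvd_diff_nat dvd_refl le_add_diff_inverse not_less dvd_add_left_iff)
    with False assms show ?thesis
      by (auto simp: geo_def fps_X_power_mult_nth)
  qed
  ultimately show "((1 - fps_X ^ d) * geo d) $ m = (1::int fps) $ m" by simp
qed

lemma kk_rel:
  assumes "d > 0" shows "(1 - fps_X ^ d) * kk d = fps_X ^ d * geo d"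
proof (rule fps_ext)
  fix m
  have "(1 - fps_X ^ d) * kk d = kk d - fps_X ^ d * kk d" by (simp add: algebra_simps)
  moreover have "(kk d - fps_X ^ d * kk d) $ m = (fps_X ^ d * geo d) $ m"
  proof (cases "m < d")
    case True
    then show ?thesis using assms
      by (auto simp: geo_def kk_def fps_X_power_mult_nth)
  next
    case False
    then have e: "d dvd (m - d) \<longleftrightarrow> d dvd m"
      by (metis dvd_diff_nat dvd_refl le_add_diff_inverse not_less dvd_add_left_iff)
    have "d dvd m \<Longrightarrow> int (m div d) - int ((m - d) div d) = 1"
    proof -
      assume "d dvd m"
      then obtain q where q: "m = d * q" by blast
      with False assms have "q \<ge> 1" by (cases q) auto
      have "m - d = d * (q - 1)" using q \<open>q \<ge> 1\<close> by (simp add: algebra_simps)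
      then show ?thesis using q assms \<open>q \<ge> 1\<close> by simp
    qed
    with False assms e show ?thesis
      by (auto simp: geo_def kk_def fps_X_power_mult_nth)
  qed
  ultimately show "((1 - fps_X ^ d) * kk d) $ m = (fps_X ^ d * geo d) $ m" by simp
qed

lemma sq_lemma:
  assumes "d > 0"
  shows "(1 + fps_X ^ d) ^ 2 * geo d ^ 2 = 1 + 4 * kk d"
    and "(1 + fps_X ^ (2*d)) * geo d ^ 2 = 1 + 2 * kk d"
proof -
  define x :: "int fps" where "x = fps_X ^ d"
  define g where "g = geo d"
  define k where "k = kk d"
  have g: "(1 - x) * g = 1" using geo_inv[OF assms] by (simp add: x_def g_def)
  have k: "(1 - x) * k = x * g" using kk_rel[OF assms] by (simp add: x_def g_def k_def)
  have nz: "(1 - x) ^ 2 \<noteq> 0" using g by (metis mult_zero_left power_not_zero zero_neq_one)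
  have "(1 - x) ^ 2 * ((1 + x) ^ 2 * g ^ 2) = (1 + x) ^ 2 * ((1 - x) * g) ^ 2"
    by (simp add: algebra_simps power2_eq_square)
  also have "\<dots> = (1 + x) ^ 2" using g by simp
  also have "\<dots> = (1 - x) ^ 2 + 4 * x" by (simp add: algebra_simps power2_eq_square)
  also have "\<dots> = (1 - x) ^ 2 + 4 * x * ((1 - x) * g)" using g by simp
  also have "\<dots> = (1 - x) ^ 2 + 4 * (1 - x) * (x * g)" by (simp add: algebra_simps)
  also have "\<dots> = (1 - x) ^ 2 + 4 * (1 - x) * ((1 - x) * k)" using k by simp
  also have "\<dots> = (1 - x) ^ 2 * (1 + 4 * k)" by (simp add: algebra_simps power2_eq_square)
  finally have "(1 + x) ^ 2 * g ^ 2 = 1 + 4 * k" using nz by simp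
  then show "(1 + fps_X ^ d) ^ 2 * geo d ^ 2 = 1 + 4 * kk d" by (simp add: x_def g_def k_def)
  have "(1 - x) ^ 2 * ((1 + x^2) * g ^ 2) = (1 + x^2) * ((1 - x) * g) ^ 2"
    by (simp add: algebra_simps power2_eq_square)
  also have "\<dots> = (1 + x^2)" using g by simp
  also have "\<dots> = (1 - x) ^ 2 + 2 * x" by (simp add: algebra_simps power2_eq_square)
  also have "\<dots> = (1 - x) ^ 2 + 2 * x * ((1 - x) * g)" using g by simp
  also have "\<dots> = (1 - x) ^ 2 + 2 * (1 - x) * (x * g)" by (simp add: algebra_simps)
  also have "\<dots> = (1 - x) ^ 2 + 2 * (1 - x) * ((1 - x) * k)" using k by simp
  also have "\<dots> = (1 - x) ^ 2 * (1 + 2 * k)" by (simp add: algebra_simps power2_eq_square)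
  finally have "(1 + x^2) * g ^ 2 = 1 + 2 * k" using nz by simp
  then show "(1 + fps_X ^ (2*d)) * geo d ^ 2 = 1 + 2 * kk d"
    by (simp add: x_def g_def k_def power_mult mult.commute)
qed

lemma kk_dvd4:
  assumes "odd d" "4 dvd m" shows "4 dvd (kk d $ m)"
proof (cases "d dvd m")
  case True
  then obtain q where q: "m = d * q" by blast
  have "coprime (4::nat) d" using assms(1)
    by (metis coprime_commute coprime_power_right_iff odd_imp_coprime_nat(1) power2_eq_square numeral_Bit0 mult_2 numeral_One)
  then have "4 dvd q" using assms(2) q by (metis coprime_dvd_mult_right_iff)
  moreover have "m div d = q" using q assms(1) by (cases "d = 0") auto
  moreover have "(4::int) dvd int q" using \<open>4 dvd q\<close> by (metis int_dvd_int_iff of_nat_numeral)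
  ultimately show ?thesis using True by (simp add: kk_def)
next
  case False then show ?thesis by (simp add: kk_def)
qed




definition fsum :: "(nat \<Rightarrow> int fps) \<Rightarrow> int fps" where
  "fsum f = Abs_fps (\<lambda>N. (\<Sum>n\<le>N. f n) $ N)"

definition good :: "(nat \<Rightarrow> int fps) \<Rightarrow> bool" where
  "good f \<longleftrightarrow> (\<forall>n j. j < n \<longrightarrow> f n $ j = 0)"

lemma fsum_nth:
  assumes "good f" "N < K" shows "fsum f $ N = (\<Sum>n<K. f n) $ N"
proof -
  have "(\<Sum>n<K. f n) $ N = (\<Sum>n<K. f n $ N)" by (simp add: fps_sum_nth)
  also have "\<dots> = (\<Sum>n\<le>N. f n $ N)"
    using assms by (intro sum.mono_neutral_right) (auto simp: good_def)
  finally show ?thesis by (simp add: fsum_def fps_sum_nth)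
qed

lemma mult_nth_trunc:
  assumes "\<And>j. j \<le> N \<Longrightarrow> F $ j = G $ j"
  shows "(a * F) $ N = (a * G) $ N"
  using assms by (simp add: fps_mult_nth)

lemma good_lin:
  assumes "good f" "good g" shows "good (\<lambda>n. a * f n + c * g n)"
  using assms unfolding good_def by (auto simp: fps_mult_nth)

lemma good_Suc: "good f \<Longrightarrow> good (\<lambda>n. f (Suc n))"
  unfolding good_def by auto

lemma fsum_lin:
  assumes "good f" "good g"
  shows "fsum (\<lambda>n. a * f n + c * g n) = a * fsum f + c * fsum g"
proof (rule fps_ext)
  fix N
  have "fsum (\<lambda>n. a * f n + c * g n) $ N = (\<Sum>n<Suc N. a * f n + c * g n) $ N"
    using good_lin[OF assms] by (rule fsum_nth) simp
  also have "\<dots> = (a * (\<Sum>n<Suc N. f n)) $ N + (c * (\<Sum>n<Suc N. g n)) $ N"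
    by (simp only: sum.distrib sum_distrib_left[symmetric] fps_add_nth)
  also have "(a * (\<Sum>n<Suc N. f n)) $ N = (a * fsum f) $ N"
    using fsum_nth[OF assms(1)] by (intro mult_nth_trunc) (metis le_imp_less_Suc)
  also have "(c * (\<Sum>n<Suc N. g n)) $ N = (c * fsum g) $ N"
    using fsum_nth[OF assms(2)] by (intro mult_nth_trunc) (metis le_imp_less_Suc)
  finally show "fsum (\<lambda>n. a * f n + c * g n) $ N = (a * fsum f + c * fsum g) $ N" by simp
qed

lemma fsum_scale:
  assumes "good f" shows "fsum (\<lambda>n. a * f n) = a * fsum f"
  using fsum_lin[OF assms assms, of a 0] by simp

lemma fsum_shift:
  assumes "good f" shows "fsum f = f 0 + fsum (\<lambda>n. f (Suc n))"
proof (rule fps_ext)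
  fix N
  have "fsum f $ N = (\<Sum>n<Suc (Suc N). f n) $ N" using assms by (rule fsum_nth) simp
  also have "\<dots> = (f 0 + (\<Sum>n<Suc N. f (Suc n))) $ N"
    by (simp only: sum.lessThan_Suc_shift)
  also have "\<dots> = f 0 $ N + fsum (\<lambda>n. f (Suc n)) $ N"
    using fsum_nth[OF good_Suc[OF assms], of N "Suc N"] by simp
  finally show "fsum f $ N = (f 0 + fsum (\<lambda>n. f (Suc n))) $ N" by simp
qed

lemma good_Xpow:
  assumes "\<And>n. e n \<ge> n" shows "good (\<lambda>n. fps_X ^ e n * F n)"
  unfolding good_def using assms by (auto simp: fps_X_power_mult_nth dest: order.strict_trans2)




abbreviation XX :: "int fps" where "XX \<equiv> fps_X"

definition Aa :: "nat \<Rightarrow> nat \<Rightarrow> int fps" where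
  "Aa i n = (\<Prod>j<n. 1 + XX ^ (2*i+1+2*j))"
definition Dd :: "nat \<Rightarrow> nat \<Rightarrow> int fps" where
  "Dd i n = (\<Prod>j<n. geo (2*i+3+2*j))"
definition cc :: "nat \<Rightarrow> nat \<Rightarrow> int fps" where
  "cc i n = XX ^ ((2*i+1)*n) * (Aa i n * Dd i n)"
definition cp :: "nat \<Rightarrow> nat \<Rightarrow> int fps" where
  "cp i n = XX ^ ((2*i+3)*n) * (Aa i n * Dd i n)"
definition Phi :: "nat \<Rightarrow> int fps" where "Phi i = fsum (cc i)"
definition Psi :: "nat \<Rightarrow> int fps" where "Psi i = fsum (cp i)"

lemma good_cc: "good (cc i)"
  unfolding cc_def by (rule good_Xpow) simp
lemma good_cp: "good (cp i)"
  unfolding cp_def by (rule good_Xpow) simp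

lemma Aa_Suc: "Aa i (Suc n) = Aa i n * (1 + XX ^ (2*i+1+2*n))"
  by (simp add: Aa_def)
lemma Dd_Suc: "Dd i (Suc n) = Dd i n * geo (2*i+3+2*n)"
  by (simp add: Dd_def)
lemma Aa_shift: "Aa i (Suc n) = (1 + XX ^ (2*i+1)) * Aa (Suc i) n"
  unfolding Aa_def prod.lessThan_Suc_shift by (simp add: algebra_simps)
lemma Dd_shift: "Dd i (Suc n) = geo (2*i+3) * Dd (Suc i) n"
  unfolding Dd_def prod.lessThan_Suc_shift by (simp add: algebra_simps)

lemma pw2: "m = p + q \<Longrightarrow> (x::'a::monoid_mult)^p * x^q = x^m"
  by (simp add: power_add)
lemma pw3: "m = p + q + r \<Longrightarrow> (x::'a::monoid_mult)^p * x^q * x^r = x^m"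
  by (simp add: power_add)

lemma alg1:
  fixes P F u v w g :: "'a::comm_ring_1"
  assumes "(1 - u*w*v)*g = 1"
  shows "w * (P*u*(F*(1+u*v)*g)) + (-(u*w)) * (P*v*(u*w)*(F*(1+u*v)*g))
         = (u*w)*(P*F) + (u*u*w)*(P*v*F)"
proof -
  have "w * (P*u*(F*(1+u*v)*g)) + (-(u*w)) * (P*v*(u*w)*(F*(1+u*v)*g))
        = P*u*w*F*(1+u*v)*((1 - u*w*v)*g)" by (simp add: algebra_simps)
  also have "\<dots> = P*u*w*F*(1+u*v)" using assms by simp
  finally show ?thesis by (simp add: algebra_simps)
qed

lemma termwise_R1:
  "XX^2 * cc i (Suc n) + (-(XX^(2*i+3))) * cp i (Suc n)
   = XX^(2*i+3) * cc i n + XX^(4*i+4) * cp i n"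
proof -
  define P where "P = XX ^ ((2*i+1)*n)"
  define u where "u = XX ^ (2*i+1)"
  define v where "v = XX ^ (2*n)"
  define w where "w = XX ^ 2"
  define F where "F = Aa i n * Dd i n"
  define g where "g = geo (2*i+3+2*n)"
  have g: "(1 - u*w*v)*g = 1"
  proof -
    have "u*w*v = XX ^ (2*i+3+2*n)" unfolding u_def v_def w_def
      by (rule pw3) simp
    then show ?thesis using geo_inv[of "2*i+3+2*n"] by (simp add: g_def)
  qed
  have e1: "cc i (Suc n) = P*u*(F*(1+u*v)*g)"
  proof -
    have "XX ^ ((2*i+1)*Suc n) = P * u" unfolding P_def u_def
      by (rule pw2[symmetric]) (simp add: algebra_simps)
    moreover have "XX ^ (2*i+1+2*n) = u * v" unfolding u_def v_def by (simp add: power_add)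
    ultimately show ?thesis unfolding cc_def Aa_Suc Dd_Suc F_def g_def
      by (simp add: algebra_simps)
  qed
  have e2: "cp i (Suc n) = P*v*(u*w)*(F*(1+u*v)*g)"
  proof -
    have h: "XX ^ ((2*i+3)*Suc n) = P * v * XX^(2*i+3)" unfolding P_def v_def
      by (rule pw3[symmetric]) (simp add: algebra_simps)
    have "XX^(2*i+3) = u*w" unfolding u_def w_def by (rule pw2[symmetric]) simp
    with h have "XX ^ ((2*i+3)*Suc n) = P * v * (u * w)" by simp
    moreover have "XX ^ (2*i+1+2*n) = u * v" unfolding u_def v_def by (simp add: power_add)
    ultimately show ?thesis unfolding cp_def Aa_Suc Dd_Suc F_def g_def
      by (simp add: algebra_simps)
  qed
  have e3: "cc i n = P * F" by (simp add: cc_def P_def F_def)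
  have e4: "cp i n = P * v * F"
  proof -
    have "XX ^ ((2*i+3)*n) = P * v" unfolding P_def v_def
      by (rule pw2[symmetric]) (simp add: algebra_simps)
    then show ?thesis by (simp add: cp_def F_def)
  qed
  have e5: "XX^(2*i+3) = u*w" unfolding u_def w_def by (rule pw2[symmetric]) simp
  have e6: "XX^(4*i+4) = u*u*w" unfolding u_def w_def by (rule pw3[symmetric]) simp
  show ?thesis unfolding e1 e2 e3 e4 e5 e6 w_def[symmetric]
    using alg1[OF g] by simp
qed

lemma cc0: "cc i 0 = 1" by (simp add: cc_def Aa_def Dd_def)
lemma cp0: "cp i 0 = 1" by (simp add: cp_def Aa_def Dd_def)

lemma R1:
  "XX^2 * (Phi i - 1) + (-(XX^(2*i+3))) * (Psi i - 1) = XX^(2*i+3) * Phi i + XX^(4*i+4) * Psi i"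
proof -
  have s1: "fsum (\<lambda>n. cc i (Suc n)) = Phi i - 1"
    using fsum_shift[OF good_cc, of i] by (simp add: Phi_def cc0)
  have s2: "fsum (\<lambda>n. cp i (Suc n)) = Psi i - 1"
    using fsum_shift[OF good_cp, of i] by (simp add: Psi_def cp0)
  have "XX^2 * (Phi i - 1) + (-(XX^(2*i+3))) * (Psi i - 1)
      = fsum (\<lambda>n. XX^2 * cc i (Suc n) + (-(XX^(2*i+3))) * cp i (Suc n))"
    by (simp only: fsum_lin[OF good_Suc[OF good_cc] good_Suc[OF good_cp]] s1 s2)
  also have "\<dots> = fsum (\<lambda>n. XX^(2*i+3) * cc i n + XX^(4*i+4) * cp i n)"
    by (simp only: termwise_R1)
  also have "\<dots> = XX^(2*i+3) * Phi i + XX^(4*i+4) * Psi i"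
    by (simp only: fsum_lin[OF good_cc good_cp] Phi_def Psi_def)
  finally show ?thesis .
qed

lemma termwise_R2:
  "cp i (Suc n) = (XX^(2*i+3) * (1 + XX^(2*i+1)) * geo (2*i+3)) * cc (Suc i) n"
proof -
  have "XX ^ ((2*i+3)*Suc n) = XX^(2*i+3) * XX^((2*Suc i+1)*n)"
    by (rule pw2[symmetric]) (simp add: algebra_simps)
  then show ?thesis unfolding cp_def cc_def Aa_shift Dd_shift by (simp add: algebra_simps)
qed

lemma R2: "Psi i = 1 + (XX^(2*i+3) * (1 + XX^(2*i+1)) * geo (2*i+3)) * Phi (Suc i)"
proof -
  have "Psi i = 1 + fsum (\<lambda>n. cp i (Suc n))"
    using fsum_shift[OF good_cp, of i] by (simp add: Psi_def cp0)
  also have "fsum (\<lambda>n. cp i (Suc n)) = fsum (\<lambda>n. (XX^(2*i+3) * (1 + XX^(2*i+1)) * geo (2*i+3)) * cc (Suc i) n)"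
    by (simp only: termwise_R2)
  also have "\<dots> = (XX^(2*i+3) * (1 + XX^(2*i+1)) * geo (2*i+3)) * Phi (Suc i)"
    by (simp only: fsum_scale[OF good_cc] Phi_def)
  finally show ?thesis .
qed

lemma alg2:
  fixes w u g Ph Ps Ph' :: "'a::comm_ring_1"
  assumes r1: "w * (Ph - 1) + (-(u*w)) * (Ps - 1) = (u*w) * Ph + (u*u*w) * Ps"
    and r2: "Ps = 1 + ((u*w) * (1 + u) * g) * Ph'"
  shows "w * ((1 - u) * Ph) = w * ((1 + u*u) + (u*u*w) * (1+u)^2 * g * Ph')"
proof -
  have "w * ((1 - u) * Ph) = w - u*w + u*w*(1+u)*Ps"
    using r1 by (simp add: algebra_simps)
  also have "\<dots> = w * ((1 + u*u) + (u*u*w) * (1+u)^2 * g * Ph')"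
    unfolding r2 by (simp add: algebra_simps power2_eq_square)
  finally show ?thesis .
qed

definition U :: "nat \<Rightarrow> int fps" where "U i = geo (2*i+1) * (1 + XX^(4*i+2))"
definition Wr :: "nat \<Rightarrow> int fps" where "Wr i = (1 + XX^(2*i+1))^2 * geo (2*i+1) * geo (2*i+3)"
definition W :: "nat \<Rightarrow> int fps" where "W i = XX^(4*i+4) * Wr i"

lemma Rec: "Phi i = U i + W i * Phi (Suc i)"
proof -
  define u where "u = XX ^ (2*i+1)"
  define w where "w = XX ^ 2"
  have e5: "XX^(2*i+3) = u*w" unfolding u_def w_def by (rule pw2[symmetric]) simp
  have e6: "XX^(4*i+4) = u*u*w" unfolding u_def w_def by (rule pw3[symmetric]) simp
  have e7: "XX^(4*i+2) = u*u" unfolding u_def by (rule pw2[symmetric]) simp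
  have "w * ((1 - u) * Phi i) = w * ((1 + u*u) + (u*u*w) * (1+u)^2 * geo (2*i+3) * Phi (Suc i))"
  proof (rule alg2)
    show "w * (Phi i - 1) + (-(u*w)) * (Psi i - 1) = (u*w) * Phi i + (u*u*w) * Psi i"
      using R1[of i] by (simp only: e5 e6 w_def u_def)
    show "Psi i = 1 + ((u*w) * (1 + u) * geo (2*i+3)) * Phi (Suc i)"
      using R2[of i] by (simp only: e5 w_def u_def)
  qed
  then have h: "(1 - u) * Phi i = (1 + u*u) + (u*u*w) * (1+u)^2 * geo (2*i+3) * Phi (Suc i)"
    by (simp add: w_def)
  have gi: "geo (2*i+1) * (1 - u) = 1" using geo_inv[of "2*i+1"] by (simp add: u_def mult.commute)
  have "Phi i = geo (2*i+1) * ((1 - u) * Phi i)" using gi by (simp add: mult.assoc[symmetric])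
  also have "\<dots> = U i + W i * Phi (Suc i)"
  proof -
    have hu: "U i = geo (2*i+1) * (1+u*u)" by (simp only: U_def e7)
    have hw: "W i = (u*u*w) * ((1+u)^2 * geo (2*i+1) * geo (2*i+3))"
      by (simp only: W_def Wr_def e6 u_def)
    show ?thesis unfolding h hu hw by (simp add: algebra_simps)
  qed
  finally show ?thesis .
qed

definition PP :: "nat \<Rightarrow> int fps" where "PP n = (\<Prod>i<n. W i)"

lemma iter: "Phi 0 = (\<Sum>n<K. PP n * U n) + PP K * Phi K"
proof (induction K)
  case 0 then show ?case by (simp add: PP_def)
next
  case (Suc K)
  have "PP K * Phi K = PP K * U K + PP (Suc K) * Phi (Suc K)"
    using Rec[of K] by (simp add: PP_def algebra_simps)
  with Suc show ?case by (simp add: algebra_simps)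
qed

lemma PP_form: "PP n = XX ^ (2*n*(n+1)) * (\<Prod>i<n. Wr i)"
proof (induction n)
  case 0 then show ?case by (simp add: PP_def)
next
  case (Suc n)
  have "PP (Suc n) = PP n * W n" by (simp add: PP_def)
  also have "\<dots> = XX ^ (2*n*(n+1)) * XX^(4*n+4) * ((\<Prod>i<n. Wr i) * Wr n)"
    unfolding Suc W_def by (simp add: algebra_simps)
  also have "XX ^ (2*n*(n+1)) * XX^(4*n+4) = XX ^ (2*Suc n*(Suc n+1))"
    by (rule pw2) (simp add: algebra_simps)
  finally show ?case by simp
qed




lemma prodL:
  "geo 1 * (\<Prod>i<n. a i * geo (2*i+1) * geo (2*i+3)) = (\<Prod>i<n. a i * geo (2*i+1)^2) * geo (2*n+1)"
proof (induction n)
  case 0 then show ?case by simp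
next
  case (Suc n)
  have "geo 1 * (\<Prod>i<Suc n. a i * geo (2*i+1) * geo (2*i+3))
      = (geo 1 * (\<Prod>i<n. a i * geo (2*i+1) * geo (2*i+3))) * (a n * geo (2*n+1) * geo (2*n+3))"
    by (simp add: algebra_simps)
  also have "\<dots> = (\<Prod>i<Suc n. a i * geo (2*i+1)^2) * geo (2*Suc n+1)"
  proof -
    have e: "2*Suc n+1 = 2*n+3" by simp
    show ?thesis unfolding Suc e by (simp add: algebra_simps power2_eq_square)
  qed
  finally show ?case .
qed

definition V :: "nat \<Rightarrow> int fps" where
  "V n = geo 1 * (\<Prod>i<n. Wr i) * U n"

lemma V_form: "V n = (\<Prod>i<n. 1 + 4 * kk (2*i+1)) * (1 + 2 * kk (2*n+1))"
proof -
  have "V n = (geo 1 * (\<Prod>i<n. (1 + XX^(2*i+1))^2 * geo (2*i+1) * geo (2*i+3))) * U n"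
    by (simp add: V_def Wr_def)
  also have "\<dots> = (\<Prod>i<n. (1 + XX^(2*i+1))^2 * geo (2*i+1)^2) * ((1 + XX^(2*(2*n+1))) * geo (2*n+1)^2)"
    unfolding prodL U_def by (simp add: algebra_simps power2_eq_square)
  also have "\<dots> = (\<Prod>i<n. 1 + 4 * kk (2*i+1)) * (1 + 2 * kk (2*n+1))"
  proof -
    have "(1 + XX^(2*i+1))^2 * geo (2*i+1)^2 = 1 + 4 * kk (2*i+1)" for i
      by (rule sq_lemma(1)) simp
    moreover have "(1 + XX^(2*(2*n+1))) * geo (2*n+1)^2 = 1 + 2 * kk (2*n+1)"
      by (rule sq_lemma(2)) simp
    ultimately show ?thesis by simp
  qed
  finally show ?thesis .
qed

lemma num_nth: "(numeral k * f) $ m = numeral k * (f $ m :: int)"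
  by (simp add: numeral_fps_const fps_const_mult_left)

definition EE :: "int fps \<Rightarrow> bool" where "EE f \<longleftrightarrow> (\<forall>m. 4 dvd m \<longrightarrow> 2 dvd f $ m)"

lemma kk_odd_dvd4: "4 dvd m \<Longrightarrow> 4 dvd (kk (2*i+1) $ m)"
  by (rule kk_dvd4) auto

lemma prod_form: "\<exists>Y. (\<Prod>i<n. 1 + 4 * kk (2*i+1)) = 1 + 4 * Y \<and> EE Y"
proof (induction n)
  case 0 then show ?case by (intro exI[of _ 0]) (simp add: EE_def)
next
  case (Suc n)
  then obtain Y where Y: "(\<Prod>i<n. 1 + 4 * kk (2*i+1)) = 1 + 4 * Y" "EE Y" by blast
  define K where "K = kk (2*n+1)"
  have "(\<Prod>i<Suc n. 1 + 4 * kk (2*i+1)) = (1 + 4 * Y) * (1 + 4 * K)"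
    using Y(1) by (simp add: K_def)
  also have "\<dots> = 1 + 4 * (Y + K + 4 * (Y * K))" by (simp add: algebra_simps)
  finally have eq: "(\<Prod>i<Suc n. 1 + 4 * kk (2*i+1)) = 1 + 4 * (Y + K + 4 * (Y * K))" .
  have "EE (Y + K + 4 * (Y * K))"
    unfolding EE_def
  proof (intro allI impI)
    fix m :: nat assume m: "4 dvd m"
    have "2 dvd Y $ m" using Y(2) m by (simp add: EE_def)
    moreover have "2 dvd K $ m" using kk_odd_dvd4[OF m, of n] by (simp add: K_def) (metis dvd_trans even_numeral)
    ultimately show "2 dvd (Y + K + 4 * (Y * K)) $ m" by (simp add: num_nth)
  qed
  with eq show ?case by blast
qed

lemma V_mod8:
  assumes "4 dvd m" shows "8 dvd (V n $ m - (if m = 0 then 1 else 0))"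
proof -
  obtain Y where Y: "(\<Prod>i<n. 1 + 4 * kk (2*i+1)) = 1 + 4 * Y" "EE Y" using prod_form by blast
  define K where "K = kk (2*n+1)"
  have "V n = 1 + 2 * K + 4 * Y + 8 * (Y * K)"
    unfolding V_form Y(1) K_def by (simp add: algebra_simps)
  then have "V n $ m - (if m = 0 then 1 else 0) = 2 * K $ m + 4 * Y $ m + 8 * (Y * K) $ m"
    by (simp add: num_nth)
  moreover have "8 dvd 2 * K $ m"
  proof -
    have "4 dvd K $ m" using kk_odd_dvd4[OF assms, of n] by (simp add: K_def)
    then show ?thesis by (metis mult_dvd_mono dvd_refl numeral_times_numeral semiring_norm(12) semiring_norm(13) num_double)
  qed
  moreover have "8 dvd 4 * Y $ m"
  proof -
    have "2 dvd Y $ m" using Y(2) assms by (simp add: EE_def)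
    then show ?thesis by (metis mult_dvd_mono dvd_refl numeral_times_numeral semiring_norm(12) semiring_norm(13) num_double)
  qed
  ultimately show ?thesis by simp
qed




definition bz :: "nat \<Rightarrow> int" where "bz N = (geo 1 * Phi 0) $ N"

lemma bz_sum: "bz N = (\<Sum>n<Suc N. XX^(2*n*(n+1)) * V n) $ N"
proof -
  define K where "K = Suc N"
  have "geo 1 * Phi 0 = (\<Sum>n<K. geo 1 * (PP n * U n)) + geo 1 * (PP K * Phi K)"
    using iter[of K] by (simp add: sum_distrib_left algebra_simps)
  also have "(\<Sum>n<K. geo 1 * (PP n * U n)) = (\<Sum>n<K. XX^(2*n*(n+1)) * V n)"
    by (intro sum.cong refl) (simp add: PP_form V_def algebra_simps)
  also have "geo 1 * (PP K * Phi K) = XX^(2*K*(K+1)) * (geo 1 * (\<Prod>i<K. Wr i) * Phi K)"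
    by (simp add: PP_form algebra_simps)
  finally have "geo 1 * Phi 0 = (\<Sum>n<K. XX^(2*n*(n+1)) * V n) + XX^(2*K*(K+1)) * (geo 1 * (\<Prod>i<K. Wr i) * Phi K)" .
  moreover have "(XX^(2*K*(K+1)) * (geo 1 * (\<Prod>i<K. Wr i) * Phi K)) $ N = 0"
    unfolding fps_X_power_mult_nth K_def by simp
  ultimately show ?thesis by (simp add: bz_def K_def)
qed

lemma bz_mod8:
  assumes "4 dvd N" "\<forall>n. N \<noteq> 2*n*(n+1)"
  shows "8 dvd bz N"
proof -
  have "bz N = (\<Sum>n<Suc N. (XX^(2*n*(n+1)) * V n) $ N)"
    by (simp add: bz_sum fps_sum_nth)
  also have "8 dvd \<dots>"
  proof (rule dvd_sum)
    fix n
    show "8 dvd (XX^(2*n*(n+1)) * V n) $ N"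
    proof (cases "N < 2*n*(n+1)")
      case True then show ?thesis by (simp add: fps_X_power_mult_nth)
    next
      case False
      have "even (n*(n+1))" by simp
      then have "4 dvd 2*n*(n+1)" by (metis mult.assoc mult_dvd_mono dvd_refl num_double numeral_times_numeral)
      then have d4: "4 dvd N - 2*n*(n+1)" using assms(1) False by (simp add: dvd_diff_nat)
      have nz: "N - 2*n*(n+1) \<noteq> 0" using assms(2) False by auto
      have "8 dvd V n $ (N - 2*n*(n+1))" using V_mod8[OF d4, of n] nz by simp
      then show ?thesis using False by (simp add: fps_X_power_mult_nth)
    qed
  qed
  finally show ?thesis .
qed

definition ratf :: "int fps \<Rightarrow> rat fps" where
  "ratf f = Abs_fps (\<lambda>n. of_int (f $ n))"

lemma ratf_nth: "ratf f $ n = of_int (f $ n)" by (simp add: ratf_def)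
lemma ratf_add: "ratf (f + g) = ratf f + ratf g" by (rule fps_ext) (simp add: ratf_nth)
lemma ratf_diff: "ratf (f - g) = ratf f - ratf g" by (rule fps_ext) (simp add: ratf_nth)
lemma ratf_mult: "ratf (f * g) = ratf f * ratf g"
  by (rule fps_ext) (simp add: ratf_nth fps_mult_nth)
lemma ratf_1: "ratf 1 = 1" by (rule fps_ext) (simp add: ratf_nth)
lemma ratf_X: "ratf fps_X = fps_X" by (rule fps_ext) (simp add: ratf_nth)
lemma ratf_power: "ratf (f ^ k) = ratf f ^ k"
  by (induction k) (simp_all add: ratf_1 ratf_mult)
lemma ratf_prod: "ratf (\<Prod>j<(m::nat). F j) = (\<Prod>j<m. ratf (F j))"
  by (induction m) (simp_all add: ratf_1 ratf_mult)
lemma ratf_sum: "ratf (\<Sum>j\<le>(m::nat). F j) = (\<Sum>j\<le>m. ratf (F j))"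
  by (induction m) (simp_all add: ratf_add)

lemma Bterm_ratf: "Bterm m = ratf (geo 1 * cc 0 m)"
proof -
  define RX :: "rat fps" where "RX = fps_X"
  have num: "qpoch (- RX) (RX ^ 2) m = ratf (Aa 0 m)"
    unfolding qpoch_def Aa_def ratf_prod
    by (intro prod.cong refl) (simp add: ratf_add ratf_1 ratf_mult ratf_power ratf_X RX_def power_mult[symmetric])
  have den: "qpoch RX (RX ^ 2) (Suc m) = ratf (\<Prod>j<Suc m. 1 - XX^(2*j+1))"
    unfolding qpoch_def ratf_prod
    by (intro prod.cong refl) (simp add: ratf_diff ratf_1 ratf_mult ratf_power ratf_X RX_def power_mult[symmetric])
  have inv1: "(\<Prod>j<Suc m. 1 - XX^(2*j+1)) * (\<Prod>j<Suc m. geo (2*j+1)) = 1"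
  proof -
    have "(\<Prod>j<Suc m. 1 - XX^(2*j+1)) * (\<Prod>j<Suc m. geo (2*j+1))
        = (\<Prod>j<Suc m. (1 - XX^(2*j+1)) * geo (2*j+1))" by (simp only: prod.distrib)
    also have "\<dots> = 1" by (intro prod.neutral ballI geo_inv) simp
    finally show ?thesis .
  qed
  have rr: "ratf (\<Prod>j<Suc m. 1 - XX^(2*j+1)) * ratf (\<Prod>j<Suc m. geo (2*j+1)) = 1"
    by (simp only: ratf_mult[symmetric] inv1 ratf_1)
  have inv: "inverse (qpoch RX (RX ^ 2) (Suc m)) = ratf (\<Prod>j<Suc m. geo (2*j+1))"
    unfolding den using rr by (rule fps_inverse_unique)
  have d0: "qpoch RX (RX ^ 2) (Suc m) $ 0 \<noteq> 0"
  proof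
    assume "qpoch RX (RX ^ 2) (Suc m) $ 0 = 0"
    then have "(ratf (\<Prod>j<Suc m. 1 - XX^(2*j+1)) * ratf (\<Prod>j<Suc m. geo (2*j+1))) $ 0 = 0"
      unfolding den by simp
    then show False unfolding rr by simp
  qed
  have "Bterm m = RX ^ m * qpoch (- RX) (RX ^ 2) m * inverse (qpoch RX (RX ^ 2) (Suc m))"
    unfolding Bterm_def RX_def by (rule fps_divide_unit) (use d0 in \<open>simp add: RX_def\<close>)
  also have "\<dots> = ratf (XX ^ m * Aa 0 m * (\<Prod>j<Suc m. geo (2*j+1)))"
    unfolding num inv by (simp add: ratf_mult ratf_power ratf_X RX_def)
  also have "(\<Prod>j<Suc m. geo (2*j+1)) = geo 1 * Dd 0 m"
    unfolding Dd_def prod.lessThan_Suc_shift by (simp add: numeral_3_eq_3)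
  finally show ?thesis by (simp add: cc_def algebra_simps)
qed

lemma b_bz: "b N = of_int (bz N)"
proof -
  have "b N = ratf (\<Sum>m\<le>N. geo 1 * cc 0 m) $ N"
    unfolding b_def Bterm_ratf ratf_sum ..
  also have "\<dots> = of_int ((geo 1 * (\<Sum>m<Suc N. cc 0 m)) $ N)"
    by (simp add: ratf_nth sum_distrib_left lessThan_Suc_atMost)
  also have "(geo 1 * (\<Sum>m<Suc N. cc 0 m)) $ N = (geo 1 * Phi 0) $ N"
    using fsum_nth[OF good_cc, of _ "Suc N" 0] unfolding Phi_def
    by (intro mult_nth_trunc) auto
  finally show ?thesis by (simp add: bz_def)
qed




lemma odd_sq_mod8:
  assumes "odd (P::nat)" shows "\<exists>s. P^2 = 8*s + 1"
proof -
  obtain r where r: "P = 2*r+1" using assms oddE by blast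
  have "even (r*(r+1))" by simp
  then obtain s where s: "r*(r+1) = 2*s" by blast
  have "P^2 = 4*(r*(r+1)) + 1" unfolding r by (simp add: power2_eq_square algebra_simps)
  then show ?thesis using s by (intro exI[of _ s]) simp
qed

theorem corollary1p8:
  fixes p l :: nat
  assumes "prime p" and "odd p" and "1 \<le> l" and "l \<le> p - 1"
    and "Legendre (int (8 * l + 1)) (int p) = -1"
  shows "\<forall>n k. \<exists>z::int.
           b (4 * p ^ (2 * k + 3) * n + ((8 * l + 1) * p ^ (2 * k + 2) - 1) div 2) = 8 * of_int z"
proof (intro allI)
  fix n k
  define a where "a = 8 * l + 1"
  define P where "P = p ^ (k+1)"
  define N where "N = 4 * p ^ (2 * k + 3) * n + ((8 * l + 1) * p ^ (2 * k + 2) - 1) div 2"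
  have P2: "p ^ (2*k+2) = P^2" unfolding P_def power_mult[symmetric] by (simp add: mult.commute)
  have P3: "p ^ (2*k+3) = P^2 * p" unfolding P2[symmetric] using pw2[of "2*k+3" "2*k+2" 1 p] by simp
  have oddP: "odd P" using assms(2) unfolding P_def by simp
  obtain s where s: "P^2 = 8*s + 1" using odd_sq_mod8[OF oddP] by blast
  have aP: "a * P^2 = 8 * (a*s + l) + 1" unfolding s a_def by (simp add: algebra_simps)
  have Nform: "N = 4 * (p ^ (2 * k + 3) * n + (a*s + l))"
    unfolding N_def P2 a_def[symmetric] aP by simp
  have d4: "4 dvd N" unfolding Nform by simp
  have two: "2*N + 1 = P^2 * (8*p*n + a)"
    unfolding Nform P3 using aP by (simp add: algebra_simps)
  have notri: "\<forall>j. N \<noteq> 2*j*(j+1)"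
  proof (intro allI notI)
    fix j assume Nj: "N = 2*j*(j+1)"
    have sq: "(2*j+1)^2 = P^2 * (8*p*n + a)"
      using two Nj by (simp add: power2_eq_square algebra_simps)
    then have "P^2 dvd (2*j+1)^2" by simp
    then have "P dvd 2*j+1" by (simp add: pow_divides_pow_iff)
    then obtain h where h: "2*j+1 = P*h" by blast
    have Pnz: "P \<noteq> 0" using oddP by (metis even_zero)
    have "P^2 * h^2 = P^2 * (8*p*n + a)" using sq h by (simp add: power_mult_distrib)
    then have hm: "h^2 = 8*p*n + a" using Pnz by simp
    have "[int h ^ 2 = int a] (mod int p)"
    proof -
      have "int h ^ 2 = int a + int p * int (8*n)" using hm by (simp add: algebra_simps flip: of_nat_power)
      then show ?thesis by (simp add: cong_iff_lin) (metis add.inverse_inverse mult_minus_right neg_eq_iff_add_eq_0)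
    qed
    then have "QuadRes (int p) (int a)" unfolding QuadRes_def by blast
    then have "Legendre (int a) (int p) \<noteq> -1" unfolding Legendre_def by simp
    then show False using assms(5) by (simp add: a_def)
  qed
  have "8 dvd bz N" using bz_mod8[OF d4 notri] .
  then obtain z where z: "bz N = 8 * z" by blast
  show "\<exists>z::int. b (4 * p ^ (2 * k + 3) * n + ((8 * l + 1) * p ^ (2 * k + 2) - 1) div 2) = 8 * of_int z"
    using z b_bz[of N] unfolding N_def by (intro exI[of _ z]) simp
qed


end
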